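(* Let $X=\bigcap_{i=1}^mX_i\subseteq\mathbb{R}^n$ with each $X_i$ closed convex and $X$ nonempty, and suppose there is $D_X>0$ with $\|u-v\|^2\le D_X^2$ for all $u,v\in X$. Let $F(x)=\mathbb{E}[F(x,\omega)]$ and assume: (A1) $F$ is $L$-Lipschitz continuous and monotone on $\mathbb{R}^n$; (A2) the solution set $X^*$ of VI$(X,F)$ is nonempty and compact and $\|F(x^* )\|\le C$ for all $x^*\in X^*$; (A4) the noise condition in the context holds with constants $\nu_1,\nu_2\ge0$; (A5) there is $\eta>0$ with $\|x-\Pi_X(x)\|^2\le\eta\max_i\|x-\Pi_{X_i}(x)\|^2$ for all $x\in\mathbb{R}^n$; (A6) $\inf_{k\ge0}P(l_k=i\mid\mathcal{F}_k)\ge\rho_i/m$ a.s. for each $i$, with $\rho_i\in(0,1]$; let $\rho=\min_i\rho_i$. Let $\{x_k\}$ be generated by (r-SPRG): $x_{k+1}=\Pi_{l_k}(x_k-\gamma_kF(2x_k-x_{k-1},\omega_k))$. Let $\beta\triangleq1-\frac{\rho}{32m\eta}$. Then: (a) if $\sum_k\gamma_k=\infty$ and $\sum_k\gamma_k^2<\infty$, then $\mathrm{dist}(x_k,X)\to0$ almost surely; (b) if $\gamma_k=1/k^{t/2}$ with $t\ge1$, then $\mathbb{E}[\mathrm{dist}(x_k,X)]\le\mathcal{O}(1/k^{t/2})$ for all $k\ge\bar k$, where $\bar k\triangleq\left\lceil\frac{1}{1-(1-\beta/2)^{1/t}}-1\right\rceil$; (c) if $\gamma_k=1/k^{1/2}$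 and $\bar x_{K,\bar k}\triangleq\frac{\sum_{k=\bar k+\lfloor K/2\rfloor}^{\bar k+K}\gamma_kx_k}{\sum_{k=\bar k+\lfloor K/2\rfloor}^{\bar k+K}\gamma_k}$ (with $\bar k$ as in (b) for $t=1$), then $\mathbb{E}[\mathrm{dist}(\bar x_{K,\bar k},X)]\le\mathcal{O}(1/\sqrt K)$.
   Context: VI$(X,F)$: find $x^*\in X$ with $F(x^* )^T(x-x^* )\ge0$ for all $x\in X$. $\Pi_{l_k}$ is Euclidean projection onto $X_{l_k}$, $l_k$ a random index; $\mathrm{dist}(x,X)=\min_{y\in X}\|x-y\|$. The scheme uses initial points $x_{-1},x_0$. $\mathcal{F}_k$ is the history before iteration $k$'s random quantities. Noise condition (A4): with $y_k=2x_k-x_{k-1}$ and $w_k=F(y_k,\omega_k)-F(y_k)$, $\mathbb{E}[w_k\mid\mathcal{F}_k]=0$ and $\mathbb{E}[\|w_k\|^2\mid\mathcal{F}_k]\le\nu_1^2\|y_k\|^2+\nu_2^2$ a.s. *)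

theory Defs
  imports "HOL-Analysis.Analysis" "HOL-Probability.Probability"
begin

definition VI_sol :: "(real^'n) set \<Rightarrow> (real^'n \<Rightarrow> real^'n) \<Rightarrow> (real^'n) set" where
  "VI_sol X F = {x \<in> X. \<forall>y\<in>X. F x \<bullet> (y - x) \<ge> 0}"

definition prev_iter :: "(nat \<Rightarrow> 'a \<Rightarrow> real^'n) \<Rightarrow> real^'n \<Rightarrow> nat \<Rightarrow> 'a \<Rightarrow> real^'n" where
  "prev_iter x xm1 k \<omega> = (if k = 0 then xm1 else x (k - 1) \<omega>)"

definition extrap :: "(nat \<Rightarrow> 'a \<Rightarrow> real^'n) \<Rightarrow> real^'n \<Rightarrow> nat \<Rightarrow> 'a \<Rightarrow> real^'n" where
  "extrap x xm1 k \<omega> = 2 *\<^sub>R x k \<omega> - prev_iter x xm1 k \<omega>"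

definition kbar :: "real \<Rightarrow> real \<Rightarrow> nat" where
  "kbar \<beta> t = nat \<lceil>1 / (1 - (1 - \<beta> / 2) powr (1 / t)) - 1\<rceil>"

definition wavg :: "(nat \<Rightarrow> real) \<Rightarrow> (nat \<Rightarrow> 'a \<Rightarrow> real^'n) \<Rightarrow> nat \<Rightarrow> nat \<Rightarrow> 'a \<Rightarrow> real^'n" where
  "wavg \<gamma> x kb K \<omega> =
     (1 / (\<Sum>k\<in>{kb + K div 2 .. kb + K}. \<gamma> k)) *\<^sub>R (\<Sum>k\<in>{kb + K div 2 .. kb + K}. \<gamma> k *\<^sub>R x k \<omega>)"

end

theory Submission
  imports Defs
begin


lemma cp_infdist:
  fixes S :: "'a::euclidean_space set"
  assumes "closed S" "S \<noteq> {}"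
  shows "norm (z - closest_point S z) = infdist z S"
  using setdist_closest_point[OF assms, of z] by (simp add: infdist_eq_setdist dist_norm)

lemma step_geom:
  fixes S X :: "'a::euclidean_space set"
  assumes S: "convex S" "closed S" and XS: "X \<subseteq> S" and X: "closed X" "X \<noteq> {}" and e: "\<epsilon> > 0"
  shows "(infdist (closest_point S (z - h)) X)^2 + (infdist z S)^2 / 2
          \<le> (1 + \<epsilon>) * (infdist z X)^2 + (2 + 1/\<epsilon>) * (norm h)^2"
proof -
  define p where "p = closest_point X z"
  define v where "v = z - h"
  define x' where "x' = closest_point S v"
  define d where "d = infdist z X"
  define a where "a = infdist z S"
  have pX: "p \<in> X" unfolding p_def using closest_point_in_set[OF X] .
  have pS: "p \<in> S" using pX XS by auto
  have Sne: "S \<noteq> {}" using pS by auto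
  have dd: "norm (z - p) = d" unfolding p_def d_def using cp_infdist[OF X] .
  have dot: "inner (v - x') (p - x') \<le> 0" unfolding x'_def using closest_point_dot[OF S pS] .
  have vx: "norm (v - x') = infdist v S" unfolding x'_def using cp_infdist[OF S(2) Sne] .
  have tri: "a \<le> infdist v S + norm h" unfolding a_def v_def
    using infdist_triangle[of z S "z - h"] by (simp add: dist_norm)
  have h1: "(norm (v - p))^2 \<ge> (norm (v - x'))^2 + (norm (x' - p))^2"
  proof -
    have e1: "v - p = (v - x') + (x' - p)" by simp
    have g: "(norm (A + B))^2 = (norm A)^2 + (norm B)^2 + 2 * inner A B" for A B :: 'a
      unfolding power2_norm_eq_inner by (simp add: inner_add inner_commute)
    have "(norm (v - p))^2 = (norm (v - x'))^2 + (norm (x' - p))^2 + 2 * inner (v - x') (x' - p)"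
      using g[of "v - x'" "x' - p"] by simp
    moreover have "inner (v - x') (x' - p) = - inner (v - x') (p - x')"
      by (metis inner_minus_right minus_diff_eq)
    ultimately show ?thesis using dot by linarith
  qed
  have h2: "(norm (v - p))^2 \<le> (1 + \<epsilon>) * d^2 + (1 + 1/\<epsilon>) * (norm h)^2"
  proof -
    have e1: "v - p = (z - p) - h" unfolding v_def by simp
    have g: "(norm (A - B))^2 = (norm A)^2 + (norm B)^2 - 2 * inner A B" for A B :: 'a
      unfolding power2_norm_eq_inner by (simp add: inner_diff inner_commute)
    have "(norm (v - p))^2 = d^2 - 2 * inner (z - p) h + (norm h)^2"
      unfolding e1 using g[of "z - p" h] dd by simp
    moreover have "- inner (z - p) h \<le> d * norm h"
      using Cauchy_Schwarz_ineq2[of "z - p" h] dd by (smt (verit))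
    moreover have "2 * d * norm h \<le> \<epsilon> * d^2 + (norm h)^2 / \<epsilon>"
    proof -
      have "0 \<le> (sqrt \<epsilon> * d - norm h / sqrt \<epsilon>)^2" by simp
      also have "\<dots> = \<epsilon> * d^2 - 2 * d * norm h + (norm h)^2 / \<epsilon>"
        using e by (simp add: power2_diff power_mult_distrib power_divide)
      finally show ?thesis by simp
    qed
    ultimately show ?thesis by (simp add: algebra_simps)
  qed
  have h3: "(norm (v - x'))^2 \<ge> a^2 / 2 - (norm h)^2"
  proof (cases "a \<le> norm h")
    case True
    then have "a^2 \<le> (norm h)^2" using a_def infdist_nonneg[of z S] by (simp add: power_mono)
    then show ?thesis using zero_le_power2[of "norm (v - x')"] zero_le_power2[of a] by linarith
  next
    case False
    then have "a - norm h \<le> norm (v - x')" using tri vx by simp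
    then have "(a - norm h)^2 \<le> (norm (v - x'))^2" using False by (simp add: power_mono)
    moreover have "a^2/2 - (norm h)^2 \<le> (a - norm h)^2"
    proof -
      have "0 \<le> (a / sqrt 2 - sqrt 2 * norm h)^2" by simp
      also have "\<dots> = a^2/2 - 2 * a * norm h + 2 * (norm h)^2"
        by (simp add: power2_diff power_mult_distrib power_divide)
      finally show ?thesis by (simp add: power2_diff)
    qed
    ultimately show ?thesis by linarith
  qed
  have h4: "infdist x' X \<le> norm (x' - p)" using infdist_le[OF pX, of x'] by (simp add: dist_norm)
  hence "(infdist x' X)^2 \<le> (norm (x' - p))^2" using infdist_nonneg[of x' X] by (simp add: power_mono)
  with h1 h2 h3 show ?thesis unfolding x'_def v_def a_def d_def by (simp add: algebra_simps)
qed

lemma sq3: "((a::real) + b + c)^2 \<le> 3 * (a^2 + b^2 + c^2)"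
proof -
  have "0 \<le> (a - b)^2 + (b - c)^2 + (a - c)^2" by simp
  then show ?thesis by (simp add: power2_eq_square algebra_simps)
qed

lemma sq2: "((a::real) + b)^2 \<le> 2 * (a^2 + b^2)"
proof -
  have "0 \<le> (a - b)^2" by simp
  then show ?thesis by (simp add: power2_eq_square algebra_simps)
qed



lemma seq_bounded:
  fixes u a :: "nat \<Rightarrow> real"
  assumes u0: "\<And>k. u k \<ge> 0" and c: "0 < c" "c \<le> 1" and a0: "a \<longlonglongrightarrow> 0" and apos: "\<And>k. a k \<ge> 0"
    and rec: "\<And>k. u (Suc (Suc k)) \<le> (1 - c) * u (Suc k) + a k * (1 + u (Suc k) + u k)"
  shows "\<exists>B. \<forall>k. u k \<le> B"
proof -
  have "\<forall>\<^sub>F k in sequentially. a k < c / 4" using c by (intro order_tendstoD(2)[OF a0]) simp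
  then obtain N where N: "\<And>k. k \<ge> N \<Longrightarrow> a k < c / 4" by (auto simp: eventually_sequentially)
  define B where "B = max (1/2) (Max (u ` {..Suc N}))"
  have B1: "B \<ge> 1/2" unfolding B_def by simp
  have Blow: "u k \<le> B" if "k \<le> Suc N" for k
    unfolding B_def using that by (intro max.coboundedI2 Max_ge) auto
  have inv: "u k \<le> B \<and> u (Suc k) \<le> B" if "k \<ge> N" for k
    using that
  proof (induction k rule: dec_induct)
    case base then show ?case using Blow by simp
  next
    case (step k)
    have "u (Suc (Suc k)) \<le> (1 - c) * u (Suc k) + a k * (1 + u (Suc k) + u k)" by (rule rec)
    also have "\<dots> \<le> (1 - c) * B + (c/4) * (1 + B + B)"
    proof -
      have "(1 - c) * u (Suc k) \<le> (1 - c) * B" using step c by (intro mult_left_mono) auto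
      moreover have "a k * (1 + u (Suc k) + u k) \<le> (c/4) * (1 + B + B)"
        using step N[OF step(1)] apos[of k] u0[of k] u0[of "Suc k"]
        by (intro mult_mono) auto
      ultimately show ?thesis by linarith
    qed
    also have "\<dots> \<le> B" using B1 c by (simp add: algebra_simps)
    finally show ?case using step by simp
  qed
  have "u k \<le> B" for k
  proof (cases "k \<le> Suc N")
    case True then show ?thesis by (rule Blow)
  next
    case False then show ?thesis using inv[of k] by simp
  qed
  then show ?thesis by blast
qed

lemma seq_lin:
  fixes u a :: "nat \<Rightarrow> real"
  assumes u0: "\<And>k. u k \<ge> 0" and c: "0 < c" "c \<le> 1" and a0: "a \<longlonglongrightarrow> 0" and apos: "\<And>k. a k \<ge> 0"
    and rec: "\<And>k. u (Suc (Suc k)) \<le> (1 - c) * u (Suc k) + a k * (1 + u (Suc k) + u k)"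
  shows "\<exists>A\<ge>0. \<forall>k. u (Suc (Suc k)) \<le> (1 - c) * u (Suc k) + A * a k"
proof -
  obtain B where B: "\<And>k. u k \<le> B" using seq_bounded[OF assms] by blast
  have "B \<ge> 0" using B[of 0] u0[of 0] by simp
  have "u (Suc (Suc k)) \<le> (1 - c) * u (Suc k) + (1 + 2 * B) * a k" for k
  proof -
    have "a k * (1 + u (Suc k) + u k) \<le> a k * (1 + 2 * B)"
      using B[of k] B[of "Suc k"] apos[of k] by (intro mult_left_mono) auto
    then show ?thesis using rec[of k] by (simp add: algebra_simps)
  qed
  then show ?thesis using \<open>B \<ge> 0\<close> by (intro exI[of _ "1 + 2 * B"]) auto
qed

lemma seq_summable:
  fixes u a :: "nat \<Rightarrow> real"
  assumes u0: "\<And>k. u k \<ge> 0" and c: "0 < c" "c \<le> 1" and a0: "summable a" and apos: "\<And>k. a k \<ge> 0"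
    and rec: "\<And>k. u (Suc (Suc k)) \<le> (1 - c) * u (Suc k) + a k * (1 + u (Suc k) + u k)"
  shows "summable u"
proof -
  have "a \<longlonglongrightarrow> 0" using a0 by (rule summable_LIMSEQ_zero)
  then obtain A where A: "A \<ge> 0" "\<And>k. u (Suc (Suc k)) \<le> (1 - c) * u (Suc k) + A * a k"
    using seq_lin[OF u0 c \<open>a \<longlonglongrightarrow> 0\<close> apos rec] by blast
  have ps: "c * (\<Sum>k<n. u (Suc k)) \<le> u 1 + A * suminf a" for n
  proof -
    have "(\<Sum>k<n. u (Suc (Suc k))) \<le> (\<Sum>k<n. (1 - c) * u (Suc k) + A * a k)"
      by (intro sum_mono A(2))
    also have "\<dots> = (1 - c) * (\<Sum>k<n. u (Suc k)) + A * (\<Sum>k<n. a k)"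
      by (simp add: sum.distrib sum_distrib_left)
    also have "(\<Sum>k<n. a k) \<le> suminf a" using a0 apos by (intro sum_le_suminf) auto
    hence "A * (\<Sum>k<n. a k) \<le> A * suminf a" using A by (intro mult_left_mono)
    finally have 1: "(\<Sum>k<n. u (Suc (Suc k))) \<le> (1 - c) * (\<Sum>k<n. u (Suc k)) + A * suminf a" by simp
    have "(\<Sum>k<Suc n. u (Suc k)) = u 1 + (\<Sum>k<n. u (Suc (Suc k)))"
      by (subst sum.lessThan_Suc_shift) simp
    moreover have "(\<Sum>k<n. u (Suc k)) \<le> (\<Sum>k<Suc n. u (Suc k))" using u0 by simp
    ultimately show ?thesis using 1 by (simp add: algebra_simps)
  qed
  have "summable (\<lambda>k. u (Suc k))"
  proof (rule summableI_nonneg_bounded[where x="(u 1 + A * suminf a) / c"])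
    show "0 \<le> u (Suc k)" for k by (rule u0)
    show "sum (\<lambda>k. u (Suc k)) {..<n} \<le> (u 1 + A * suminf a) / c" for n
      using ps[of n] c by (simp add: field_simps)
  qed
  then show ?thesis by (simp add: summable_Suc_iff)
qed

lemma seq_rate:
  fixes E g :: "nat \<Rightarrow> real"
  assumes E0: "\<And>k. E k \<ge> 0" and c: "0 < c" "c \<le> 1" and A: "A \<ge> 0" and gpos: "\<And>k. g k > 0"
    and rec: "\<And>k. E (Suc k) \<le> (1 - c) * E k + A * g k"
    and ev: "\<forall>\<^sub>F k in sequentially. (1 - c/2) * g k \<le> g (Suc k)"
  shows "\<exists>B>0. \<forall>k. E k \<le> B * g k"
proof -
  obtain N where N: "\<And>k. k \<ge> N \<Longrightarrow> (1 - c/2) * g k \<le> g (Suc k)" using ev by (auto simp: eventually_sequentially)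
  define B where "B = max (2 * A / c + 1) (Max ((\<lambda>k. E k / g k) ` {..N}))"
  have Bpos: "B > 0" unfolding B_def using A c by (intro max.strict_coboundedI1) (simp add: field_simps)
  have BA: "A \<le> c * B / 2" unfolding B_def using A c by (simp add: field_simps max_def)
  have low: "E k \<le> B * g k" if "k \<le> N" for k
  proof -
    have "E k / g k \<le> B" unfolding B_def using that by (intro max.coboundedI2 Max_ge) auto
    then show ?thesis using gpos[of k] by (simp add: field_simps)
  qed
  have hi: "E k \<le> B * g k" if "k \<ge> N" for k
    using that
  proof (induction k rule: dec_induct)
    case base then show ?case using low by simp
  next
    case (step k)
    have "E (Suc k) \<le> (1 - c) * E k + A * g k" by (rule rec)
    also have "\<dots> \<le> (1 - c) * (B * g k) + (c * B / 2) * g k"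
      using step c BA gpos[of k] by (intro add_mono mult_left_mono mult_right_mono) auto
    also have "\<dots> = B * ((1 - c/2) * g k)" by (simp add: algebra_simps)
    also have "\<dots> \<le> B * g (Suc k)" using N[OF step(1)] Bpos by (intro mult_left_mono) auto
    finally show ?case .
  qed
  show ?thesis using low hi Bpos by (metis nle_le)
qed

lemma powr_ratio_ev:
  fixes t c :: real
  assumes "0 < c" "c \<le> 1"
  shows "\<forall>\<^sub>F k in sequentially. (1 - c/2) * (1 / real k powr t) \<le> 1 / real (Suc k) powr t"
proof -
  have "(\<lambda>k. (real (Suc k) / real k) powr t) \<longlonglongrightarrow> 1 powr t"
  proof (rule tendsto_powr)
    have "(\<lambda>k. 1 + 1 / real k) \<longlonglongrightarrow> 1 + 0"
      by (intro tendsto_add tendsto_const lim_const_over_n)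
    moreover have "\<forall>\<^sub>F k in sequentially. 1 + 1 / real k = real (Suc k) / real k"
      using eventually_gt_at_top[of 0] by eventually_elim (simp add: field_simps)
    ultimately show "(\<lambda>k. real (Suc k) / real k) \<longlonglongrightarrow> 1" using tendsto_cong by force
  qed auto
  then have "\<forall>\<^sub>F k in sequentially. (real (Suc k) / real k) powr t < 1 / (1 - c/2)"
    using assms by (intro order_tendstoD(2)) (auto simp: field_simps)
  then show ?thesis using eventually_gt_at_top[of 0]
  proof eventually_elim
    case (elim k)
    define r where "r = (real (Suc k) / real k) powr t"
    define P where "P = real k powr t"
    have P: "P > 0" unfolding P_def using elim by simp
    have r: "r > 0" unfolding r_def using elim by simp
    have eq: "real (Suc k) powr t = P * r"
      unfolding P_def r_def using elim by (simp add: powr_divide)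
    have "(1 - c/2) * r < 1" using elim(1) assms unfolding r_def[symmetric] by (simp add: field_simps)
    hence "(1 - c/2) * r \<le> 1" by simp
    hence "P * ((1 - c/2) * r) \<le> P * 1" using P by (intro mult_left_mono) auto
    hence "(1 - c/2) * (1 / P) \<le> 1 / (P * r)" using P r by (simp add: field_simps)
    then show ?case using eq unfolding P_def by simp
  qed
qed



lemma rce_le_nn: "real_cond_exp M F f w \<le> enn2real (nn_cond_exp M F (\<lambda>x. ennreal (f x)) w)"
  unfolding real_cond_exp_def by simp

lemma ennreal_enn2real_le: "ennreal (enn2real z) \<le> z"
  by (simp add: ennreal_enn2real_if)

lemma amgm_int:
  assumes "prob_space M" and fM: "f \<in> borel_measurable M" and f0: "\<And>w. f w \<ge> 0" and s: "s > 0" and V: "V \<ge> 0"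
    and I: "(\<integral>\<^sup>+ w. ennreal ((f w)^2) \<partial>M) \<le> ennreal V"
  shows "(\<integral>\<^sup>+ w. ennreal (f w) \<partial>M) \<le> ennreal (V / (2 * s) + s / 2)"
proof -
  interpret prob_space M by fact
  have pw: "f w \<le> (f w)^2 / (2 * s) + s / 2" for w
  proof -
    have "0 \<le> (f w - s)^2" by simp
    then show ?thesis using s by (simp add: field_simps power2_diff power2_eq_square)
  qed
  have "(\<integral>\<^sup>+ w. ennreal (f w) \<partial>M) \<le> (\<integral>\<^sup>+ w. ennreal ((f w)^2) * ennreal (1/(2 * s)) + ennreal (s / 2) \<partial>M)"
  proof (rule nn_integral_mono)
    fix w
    have "ennreal (f w) \<le> ennreal ((f w)^2 * (1/(2 * s)) + s / 2)" using pw[of w] by (intro ennreal_leI) simp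
    also have "\<dots> = ennreal ((f w)^2) * ennreal (1/(2 * s)) + ennreal (s / 2)"
      using s by (simp add: ennreal_plus ennreal_mult[symmetric])
    finally show "ennreal (f w) \<le> ennreal ((f w)^2) * ennreal (1/(2 * s)) + ennreal (s / 2)" .
  qed
  also have "\<dots> = (\<integral>\<^sup>+ w. ennreal ((f w)^2) \<partial>M) * ennreal (1/(2 * s)) + ennreal (s / 2)"
    using fM by (simp add: nn_integral_add nn_integral_multc emeasure_space_1)
  also have "\<dots> \<le> ennreal V * ennreal (1/(2 * s)) + ennreal (s / 2)"
    using I by (intro add_mono mult_right_mono) auto
  also have "\<dots> = ennreal (V / (2 * s) + s / 2)" using s V by (simp add: ennreal_plus ennreal_mult[symmetric])
  finally show ?thesis .
qed

lemma infdist_convex_comb: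
  fixes X :: "'a::euclidean_space set"
  assumes X: "convex X" "closed X" "X \<noteq> {}" and I: "finite I" and w0: "\<And>i. i \<in> I \<Longrightarrow> w i \<ge> 0" and w1: "sum w I = 1"
  shows "infdist (\<Sum>i\<in>I. w i *\<^sub>R z i) X \<le> (\<Sum>i\<in>I. w i * infdist (z i) X)"
proof -
  define p where "p i = closest_point X (z i)" for i
  have pX: "p i \<in> X" for i unfolding p_def using closest_point_in_set[OF X(2,3)] .
  have "(\<Sum>i\<in>I. w i *\<^sub>R p i) \<in> X" using convex_sum[OF I X(1) w1] w0 pX by auto
  then have "infdist (\<Sum>i\<in>I. w i *\<^sub>R z i) X \<le> norm ((\<Sum>i\<in>I. w i *\<^sub>R z i) - (\<Sum>i\<in>I. w i *\<^sub>R p i))"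
    using infdist_le by (metis dist_norm)
  also have "\<dots> = norm (\<Sum>i\<in>I. w i *\<^sub>R (z i - p i))" by (simp add: sum_subtractf scaleR_diff_right)
  also have "\<dots> \<le> (\<Sum>i\<in>I. norm (w i *\<^sub>R (z i - p i)))" by (rule norm_sum)
  also have "\<dots> = (\<Sum>i\<in>I. w i * infdist (z i) X)"
  proof (rule sum.cong)
    fix i assume "i \<in> I"
    have "norm (z i - p i) = infdist (z i) X" unfolding p_def
      using setdist_closest_point[OF X(2,3), of "z i"] by (simp add: infdist_eq_setdist dist_norm)
    then show "norm (w i *\<^sub>R (z i - p i)) = w i * infdist (z i) X" using w0[OF \<open>i \<in> I\<close>] by simp
  qed simp
  finally show ?thesis .
qed


theorem theorem4:
  fixes M :: "'a measure"
    and Filt :: "nat \<Rightarrow> 'a measure"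
    and m :: nat
    and Xs :: "nat \<Rightarrow> (real^'n) set"
    and DX L C \<nu>1 \<nu>2 \<eta> :: real
    and \<rho>i :: "nat \<Rightarrow> real"
    and F :: "real^'n \<Rightarrow> real^'n"
    and G :: "real^'n \<Rightarrow> 'w \<Rightarrow> real^'n"
    and om :: "nat \<Rightarrow> 'a \<Rightarrow> 'w"
    and l :: "nat \<Rightarrow> 'a \<Rightarrow> nat"
    and \<gamma> :: "nat \<Rightarrow> real"
    and x :: "nat \<Rightarrow> 'a \<Rightarrow> real^'n"
    and xm1 x0 :: "real^'n"
  defines "X \<equiv> (\<Inter>i\<in>{1..m}. Xs i)"
    and "\<rho> \<equiv> Min (\<rho>i ` {1..m})"
  defines "\<beta> \<equiv> 1 - \<rho> / (32 * real m * \<eta>)"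
  assumes M: "prob_space M"
    and filt_sub: "\<forall>k. subalgebra M (Filt k)"
    and filt_mono: "\<forall>k. sets (Filt k) \<subseteq> sets (Filt (Suc k))"
    and m_pos: "m \<ge> 1"
    and Xs_cc: "\<forall>i\<in>{1..m}. closed (Xs i) \<and> convex (Xs i)"
    and X_ne: "X \<noteq> {}"
    and DX: "DX > 0" "\<forall>u\<in>X. \<forall>v\<in>X. norm (u - v)^2 \<le> DX^2"
    and G_mean: "\<forall>k z. integrable M (\<lambda>\<omega>. G z (om k \<omega>)) \<and>
                        (\<integral>\<omega>. G z (om k \<omega>) \<partial>M) = F z"
    and A1: "L > 0" "\<forall>u v. norm (F u - F v) \<le> L * norm (u - v)"
            "\<forall>u v. (F u - F v) \<bullet> (u - v) \<ge> 0"
    and A2: "VI_sol X F \<noteq> {}" "compact (VI_sol X F)"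
            "\<forall>xs\<in>VI_sol X F. norm (F xs) \<le> C"
    and A4: "\<nu>1 \<ge> 0" "\<nu>2 \<ge> 0"
            "\<forall>k. integrable M (\<lambda>\<omega>. G (extrap x xm1 k \<omega>) (om k \<omega>) - F (extrap x xm1 k \<omega>))"
            "\<forall>k j. AE \<omega> in M. real_cond_exp M (Filt k)
                    (\<lambda>\<omega>. (G (extrap x xm1 k \<omega>) (om k \<omega>) - F (extrap x xm1 k \<omega>)) $ j) \<omega> = 0"
            "\<forall>k. AE \<omega> in M. nn_cond_exp M (Filt k)
                    (\<lambda>\<omega>. ennreal ((norm (G (extrap x xm1 k \<omega>) (om k \<omega>) - F (extrap x xm1 k \<omega>)))^2)) \<omega>
                  \<le> ennreal (\<nu>1^2 * (norm (extrap x xm1 k \<omega>))^2 + \<nu>2^2)"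
    and A5: "\<eta> > 0"
            "\<forall>z. (norm (z - closest_point X z))^2
                   \<le> \<eta> * (MAX i\<in>{1..m}. (norm (z - closest_point (Xs i) z))^2)"
    and A6: "\<forall>i\<in>{1..m}. 0 < \<rho>i i \<and> \<rho>i i \<le> 1"
            "\<forall>i\<in>{1..m}. AE \<omega> in M. \<forall>k.
                real_cond_exp M (Filt k) (indicator {\<omega>\<in>space M. l k \<omega> = i}) \<omega> \<ge> \<rho>i i / real m"
    and l_range: "\<forall>k. \<forall>\<omega>\<in>space M. l k \<omega> \<in> {1..m}"
    and adapted: "\<forall>k. x k \<in> borel_measurable (Filt k)"
            "\<forall>k. l k \<in> measurable (Filt (Suc k)) (count_space UNIV)"
            "\<forall>k. (\<lambda>\<omega>. G (extrap x xm1 k \<omega>) (om k \<omega>)) \<in> borel_measurable (Filt (Suc k))"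
    and step_pos: "\<forall>k. \<gamma> k > 0"
    and init: "\<forall>\<omega>\<in>space M. x 0 \<omega> = x0"
    and rSPRG: "\<forall>k. \<forall>\<omega>\<in>space M. x (Suc k) \<omega> =
                 closest_point (Xs (l k \<omega>)) (x k \<omega> - \<gamma> k *\<^sub>R G (extrap x xm1 k \<omega>) (om k \<omega>))"
  shows
    "((\<not> summable \<gamma>) \<and> summable (\<lambda>k. (\<gamma> k)^2) \<longrightarrow>
        (AE \<omega> in M. (\<lambda>k. infdist (x k \<omega>) X) \<longlonglongrightarrow> 0))
   \<and> (\<forall>t::real. t \<ge> 1 \<and> (\<forall>k\<ge>1. \<gamma> k = 1 / (real k) powr (t / 2)) \<longrightarrow>
        (\<exists>B. \<forall>k\<ge>kbar \<beta> t.
            (\<integral>\<^sup>+ \<omega>. ennreal (infdist (x k \<omega>) X) \<partial>M) \<le> ennreal (B / (real k) powr (t / 2))))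
   \<and> ((\<forall>k\<ge>1. \<gamma> k = 1 / sqrt (real k)) \<longrightarrow>
        (\<exists>B. \<forall>K\<ge>1.
            (\<integral>\<^sup>+ \<omega>. ennreal (infdist (wavg \<gamma> x (kbar \<beta> 1) K \<omega>) X) \<partial>M)
              \<le> ennreal (B / sqrt (real K))))"
proof -
  interpret prob_space M by (rule M)
  have sfs: "sigma_finite_subalgebra M (Filt k)" for k
    by (rule finite_measure_subalgebra_is_sigma_finite)
       (simp add: finite_measure_subalgebra_def finite_measure_subalgebra_axioms_def filt_sub finite_measure_axioms)
  have sub: "subalgebra M (Filt k)" for k using filt_sub by simp
  have Xcl: "closed X" unfolding X_def using Xs_cc by (intro closed_INT) auto
  have Xcv: "convex X" unfolding X_def using Xs_cc by (intro convex_INT) auto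
  have XXs: "X \<subseteq> Xs i" if "i \<in> {1..m}" for i unfolding X_def using that by auto
  have Xs_ne: "Xs i \<noteq> {}" if "i \<in> {1..m}" for i using XXs[OF that] X_ne by auto
  obtain p0 where p0: "p0 \<in> X" using X_ne by auto
  have Xbd: "norm (u - p0) \<le> DX" if "u \<in> X" for u
  proof -
    have "(norm (u - p0))^2 \<le> DX^2" using DX(2) that p0 by auto
    from power2_le_imp_le[OF this] show ?thesis using DX(1) by simp
  qed
  define R where "R = norm p0 + DX"
  have normR: "norm z \<le> infdist z X + R" for z
  proof -
    have cpX: "closest_point X z \<in> X" using closest_point_in_set[OF Xcl X_ne] .
    have "norm z \<le> norm (z - closest_point X z) + norm (closest_point X z - p0) + norm p0"
    proof -
      have e: "z = (z - closest_point X z) + (closest_point X z - p0) + p0" by simp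
      have "norm z \<le> norm ((z - closest_point X z) + (closest_point X z - p0)) + norm p0"
        by (subst e) (rule norm_triangle_ineq)
      also have "norm ((z - closest_point X z) + (closest_point X z - p0)) \<le> norm (z - closest_point X z) + norm (closest_point X z - p0)"
        by (rule norm_triangle_ineq)
      finally show ?thesis by simp
    qed
    then show ?thesis unfolding R_def using cp_infdist[OF Xcl X_ne, of z] Xbd[OF cpX] by simp
  qed
  have R0: "R \<ge> 0" unfolding R_def using DX by simp
  have A5': "(infdist z X)^2 \<le> \<eta> * (\<Sum>i\<in>{1..m}. (infdist z (Xs i))^2)" for z
  proof -
    have fin: "finite ((\<lambda>i. (norm (z - closest_point (Xs i) z))^2) ` {1..m})" by simp
    have ne: "(\<lambda>i. (norm (z - closest_point (Xs i) z))^2) ` {1..m} \<noteq> {}" using m_pos by auto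
    obtain i where i: "i \<in> {1..m}" and iM: "(MAX i\<in>{1..m}. (norm (z - closest_point (Xs i) z))^2) = (norm (z - closest_point (Xs i) z))^2"
      using Max_in[OF fin ne] by auto
    have "(norm (z - closest_point (Xs i) z))^2 = (infdist z (Xs i))^2"
      using cp_infdist[OF _ Xs_ne[OF i], of z] Xs_cc i by simp
    also have "\<dots> \<le> (\<Sum>i\<in>{1..m}. (infdist z (Xs i))^2)" using i by (intro member_le_sum) auto
    finally have "(MAX i\<in>{1..m}. (norm (z - closest_point (Xs i) z))^2) \<le> (\<Sum>i\<in>{1..m}. (infdist z (Xs i))^2)"
      using iM by simp
    then have "\<eta> * (MAX i\<in>{1..m}. (norm (z - closest_point (Xs i) z))^2) \<le> \<eta> * (\<Sum>i\<in>{1..m}. (infdist z (Xs i))^2)"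
      using A5(1) by (intro mult_left_mono) auto
    moreover have "(infdist z X)^2 = (norm (z - closest_point X z))^2" using cp_infdist[OF Xcl X_ne, of z] by simp
    moreover have "(norm (z - closest_point X z))^2 \<le> \<eta> * (MAX i\<in>{1..m}. (norm (z - closest_point (Xs i) z))^2)"
      using A5(2) by blast
    ultimately show ?thesis by linarith
  qed
  have eta1: "\<eta> \<ge> 1"
  proof -
    have "bounded X" unfolding bounded_iff
    proof (intro exI ballI)
      fix u assume "u \<in> X"
      have "norm u \<le> norm p0 + norm (u - p0)" by (rule norm_triangle_sub)
      then show "norm u \<le> norm p0 + DX" using Xbd[OF \<open>u \<in> X\<close>] by simp
    qed
    then have "X \<noteq> UNIV" using not_bounded_UNIV by auto
    then obtain z where z: "z \<notin> X" by auto
    have dpos: "infdist z X > 0" using infdist_pos_not_in_closed[OF Xcl X_ne z] .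
    have fin: "finite ((\<lambda>i. (norm (z - closest_point (Xs i) z))^2) ` {1..m})" by simp
    have ne: "(\<lambda>i. (norm (z - closest_point (Xs i) z))^2) ` {1..m} \<noteq> {}" using m_pos by auto
    have "(MAX i\<in>{1..m}. (norm (z - closest_point (Xs i) z))^2) \<le> (infdist z X)^2"
    proof (subst Max_le_iff[OF fin ne], safe)
      fix i assume i: "i \<in> {1..m}"
      have "norm (z - closest_point (Xs i) z) = infdist z (Xs i)"
        using cp_infdist[OF _ Xs_ne[OF i], of z] Xs_cc i by simp
      also have "\<dots> \<le> infdist z X" using infdist_mono[OF XXs[OF i] X_ne] .
      finally show "(norm (z - closest_point (Xs i) z))^2 \<le> (infdist z X)^2"
        by (intro power_mono) auto
    qed
    then have "\<eta> * (MAX i\<in>{1..m}. (norm (z - closest_point (Xs i) z))^2) \<le> \<eta> * (infdist z X)^2"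
      using A5(1) by (intro mult_left_mono) auto
    moreover have "(infdist z X)^2 \<le> \<eta> * (MAX i\<in>{1..m}. (norm (z - closest_point (Xs i) z))^2)"
    proof -
      have "(norm (z - closest_point X z))^2 \<le> \<eta> * (MAX i\<in>{1..m}. (norm (z - closest_point (Xs i) z))^2)"
        using A5(2) by blast
      then show ?thesis using cp_infdist[OF Xcl X_ne, of z] by simp
    qed
    ultimately have "(infdist z X)^2 \<le> \<eta> * (infdist z X)^2" by linarith
    then show ?thesis using dpos by (simp add: field_simps)
  qed
  have fin_m: "finite (\<rho>i ` {1..m})" "\<rho>i ` {1..m} \<noteq> {}" using m_pos by auto
  have rho_le: "\<rho> \<le> \<rho>i i" if "i \<in> {1..m}" for i unfolding \<rho>_def using that fin_m by simp
  have rho_pos: "\<rho> > 0" unfolding \<rho>_def using fin_m A6(1) by simp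
  have rho1: "\<rho> \<le> 1"
  proof -
    have i1: "(1::nat) \<in> {1..m}" using m_pos by simp
    show ?thesis using rho_le[OF i1] A6(1) i1 by force
  qed
  define c where "c = \<rho> / (4 * real m * \<eta>)"
  have c_pos: "c > 0" unfolding c_def using rho_pos m_pos eta1 by simp
  have c_le: "c \<le> 1"
  proof -
    have "1 \<le> real m * \<eta>" using m_pos eta1 by (metis mult_mono' of_nat_1 of_nat_le_iff mult_1 zero_le_one)
    then have "\<rho> \<le> 4 * real m * \<eta>" using rho1 by linarith
    then show ?thesis unfolding c_def using rho_pos m_pos eta1 by (simp add: field_simps)
  qed
  have kbar1: "kbar \<beta> t \<ge> 1" if "t \<ge> 1" for t
  proof -
    have mE: "1 \<le> real m * \<eta>" using m_pos eta1 by (metis mult_mono' of_nat_1 of_nat_le_iff mult_1 zero_le_one)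
    have q: "\<rho> / (32 * real m * \<eta>) \<le> 1/32" using rho1 mE rho_pos
      by (simp add: field_simps)
    have q0: "\<rho> / (32 * real m * \<eta>) > 0" using rho_pos m_pos eta1 by simp
    define b where "b = 1 - \<beta> / 2"
    define r where "r = \<rho> / (32 * real m * \<eta>)"
    have br: "b = 1 - (1 - r) / 2" unfolding b_def \<beta>_def r_def by simp
    have r1: "r \<le> 1/32" "0 < r" using q q0 unfolding r_def by simp_all
    have b1: "0 < b" unfolding br using r1 by simp
    have b2: "b < 1" unfolding br using r1 by simp
    note b = b1 b2
    define p where "p = b powr (1 / t)"
    have p: "0 < p" "p < 1" unfolding p_def using b that
      using powr_less_mono2[of "1/t" b 1] by auto
    have "1 / (1 - p) > 1" using p by (simp add: field_simps)
    then have "1 < \<lceil>1 / (1 - p)\<rceil>" by simp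
    then have "1 \<le> \<lceil>1 / (1 - p) - 1\<rceil>" by simp
    from nat_mono[OF this] have "1 \<le> nat (\<lceil>1 / (1 - p) - 1\<rceil>)" by simp
    then show ?thesis unfolding kbar_def p_def b_def by simp
  qed
  have xF: "x k \<in> borel_measurable (Filt k)" for k using adapted(1) by simp
  have xM[measurable]: "x k \<in> borel_measurable M" for k using measurable_from_subalg[OF sub xF] .
  have prev_eq: "prev_iter x xm1 k = (if k = 0 then (\<lambda>_. xm1) else x (k - 1))" for k
    by (auto simp: prev_iter_def fun_eq_iff)
  have prevM[measurable]: "prev_iter x xm1 k \<in> borel_measurable M" for k
    unfolding prev_eq by (cases "k = 0") auto
  have extrap_eq: "extrap x xm1 k = (\<lambda>\<omega>. 2 *\<^sub>R x k \<omega> - prev_iter x xm1 k \<omega>)" for k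
    by (auto simp: extrap_def fun_eq_iff)
  have extM[measurable]: "extrap x xm1 k \<in> borel_measurable M" for k
    unfolding extrap_eq by measurable
  have Fcont: "continuous_on UNIV F"
  proof -
    have "L-lipschitz_on UNIV F" by (rule lipschitz_onI) (use A1 in \<open>auto simp: dist_norm\<close>)
    then show ?thesis by (rule lipschitz_on_continuous_on)
  qed
  have FB[measurable]: "F \<in> borel_measurable borel" using borel_measurable_continuous_onI[OF Fcont] .
  have gM[measurable]: "(\<lambda>\<omega>. G (extrap x xm1 k \<omega>) (om k \<omega>)) \<in> borel_measurable M" for k
    using measurable_from_subalg[OF sub adapted(3)[rule_format]] .
  have infd_meas: "(\<lambda>\<omega>. infdist (f \<omega>) S) \<in> borel_measurable N" if "f \<in> borel_measurable N" for f :: "'a \<Rightarrow> real^'n" and S N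
  proof -
    have "(\<lambda>z::real^'n. infdist z S) \<in> borel_measurable borel"
      by (intro borel_measurable_continuous_onI continuous_on_infdist continuous_on_id)
    then show ?thesis using that by (rule measurable_compose[rotated])
  qed
  have lM[measurable]: "l k \<in> measurable M (count_space UNIV)" for k
    using measurable_from_subalg[OF sub adapted(2)[rule_format]] .
  define D where "D = (\<lambda>k \<omega>. infdist (x k \<omega>) X)"
  define Dp where "Dp = (\<lambda>k \<omega>. infdist (prev_iter x xm1 k \<omega>) X)"
  define e where "e = (\<lambda>k. \<integral>\<^sup>+\<omega>. ennreal ((D k \<omega>)^2) \<partial>M)"
  define ep where "ep = (\<lambda>k. \<integral>\<^sup>+\<omega>. ennreal ((Dp k \<omega>)^2) \<partial>M)"
  have DM[measurable]: "D k \<in> borel_measurable M" for k unfolding D_def using infd_meas[OF xM] .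
  have DpM[measurable]: "Dp k \<in> borel_measurable M" for k unfolding Dp_def using infd_meas[OF prevM] .
  have D0: "D k \<omega> \<ge> 0" "Dp k \<omega> \<ge> 0" for k \<omega> unfolding D_def Dp_def by (simp_all add: infdist_nonneg)
  have ep_Suc: "ep (Suc k) = e k" for k unfolding ep_def e_def Dp_def D_def by (simp add: prev_iter_def)
  have ep0: "ep 0 = ennreal ((infdist xm1 X)^2)" unfolding ep_def Dp_def
    by (simp add: prev_iter_def emeasure_space_1)
  have e0: "e 0 = ennreal ((infdist x0 X)^2)"
  proof -
    have "e 0 = (\<integral>\<^sup>+\<omega>. ennreal ((infdist x0 X)^2) \<partial>M)" unfolding e_def D_def
      by (rule nn_integral_cong) (simp add: init)
    then show ?thesis by (simp add: emeasure_space_1)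
  qed
  have LIN: "(\<integral>\<^sup>+\<omega>. ennreal (\<alpha> + \<beta> * (D k \<omega>)^2 + \<beta>' * (Dp k \<omega>)^2) \<partial>M)
      = ennreal \<alpha> + ennreal \<beta> * e k + ennreal \<beta>' * ep k"
    if "\<alpha> \<ge> 0" "\<beta> \<ge> 0" "\<beta>' \<ge> 0" for \<alpha> \<beta> \<beta>' k
  proof -
    have "(\<integral>\<^sup>+\<omega>. ennreal (\<alpha> + \<beta> * (D k \<omega>)^2 + \<beta>' * (Dp k \<omega>)^2) \<partial>M)
        = (\<integral>\<^sup>+\<omega>. ennreal \<alpha> + ennreal \<beta> * ennreal ((D k \<omega>)^2) + ennreal \<beta>' * ennreal ((Dp k \<omega>)^2) \<partial>M)"
      using that by (intro nn_integral_cong) (simp add: ennreal_plus ennreal_mult)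
    also have "\<dots> = ennreal \<alpha> + ennreal \<beta> * e k + ennreal \<beta>' * ep k"
      unfolding e_def ep_def by (simp add: nn_integral_add nn_integral_cmult emeasure_space_1)
    finally show ?thesis .
  qed
  have normy2: "(norm (extrap x xm1 k \<omega>))^2 \<le> 27 * R^2 + 12 * (D k \<omega>)^2 + 12 * (Dp k \<omega>)^2" for k \<omega>
  proof -
    have "norm (extrap x xm1 k \<omega>) \<le> norm (2 *\<^sub>R x k \<omega>) + norm (prev_iter x xm1 k \<omega>)"
      unfolding extrap_def by (rule norm_triangle_ineq4)
    also have "\<dots> \<le> 2 * (D k \<omega> + R) + (Dp k \<omega> + R)"
      using normR[of "x k \<omega>"] normR[of "prev_iter x xm1 k \<omega>"] unfolding D_def Dp_def by simp
    finally have n1: "norm (extrap x xm1 k \<omega>) \<le> 2 * D k \<omega> + Dp k \<omega> + 3 * R" by simp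
    have "(norm (extrap x xm1 k \<omega>))^2 \<le> (2 * D k \<omega> + Dp k \<omega> + 3 * R)^2"
      using n1 by (intro power_mono) auto
    also have "\<dots> \<le> 3 * ((2 * D k \<omega>)^2 + (Dp k \<omega>)^2 + (3 * R)^2)" by (rule sq3)
    also have "\<dots> \<le> 27 * R^2 + 12 * (D k \<omega>)^2 + 12 * (Dp k \<omega>)^2"
      by (simp add: power_mult_distrib)
    finally show ?thesis .
  qed
  define \<alpha>1 where "\<alpha>1 = 4 * (norm (F 0))^2 + 108 * L^2 * R^2"
  define \<beta>1 where "\<beta>1 = 48 * L^2"
  define \<alpha>2 where "\<alpha>2 = 27 * \<nu>1^2 * R^2 + \<nu>2^2"
  define \<beta>2 where "\<beta>2 = 12 * \<nu>1^2"
  have ab0: "\<alpha>1 \<ge> 0" "\<beta>1 \<ge> 0" "\<alpha>2 \<ge> 0" "\<beta>2 \<ge> 0" unfolding \<alpha>1_def \<beta>1_def \<alpha>2_def \<beta>2_def by simp_all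
  have normg: "(norm (G (extrap x xm1 k \<omega>) (om k \<omega>)))^2 \<le> \<alpha>1 + \<beta>1 * (D k \<omega>)^2 + \<beta>1 * (Dp k \<omega>)^2
      + 2 * (norm (G (extrap x xm1 k \<omega>) (om k \<omega>) - F (extrap x xm1 k \<omega>)))^2" for k \<omega>
  proof -
    define y where "y = extrap x xm1 k \<omega>"
    define g where "g = G y (om k \<omega>)"
    have "norm (F y) \<le> norm (F 0) + L * norm y"
      using A1(2)[rule_format, of y 0] norm_triangle_sub[of "F y" "F 0"] by simp
    then have "(norm (F y))^2 \<le> (norm (F 0) + L * norm y)^2" by (intro power_mono) auto
    also have "\<dots> \<le> 2 * ((norm (F 0))^2 + (L * norm y)^2)" by (rule sq2)
    finally have f1: "(norm (F y))^2 \<le> 2 * (norm (F 0))^2 + 2 * L^2 * (norm y)^2" by (simp add: power_mult_distrib)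
    have "norm g \<le> norm (F y) + norm (g - F y)" using norm_triangle_sub[of g "F y"] by simp
    then have "(norm g)^2 \<le> (norm (F y) + norm (g - F y))^2" by (intro power_mono) auto
    also have "\<dots> \<le> 2 * ((norm (F y))^2 + (norm (g - F y))^2)" by (rule sq2)
    finally have g1: "(norm g)^2 \<le> 2 * (norm (F y))^2 + 2 * (norm (g - F y))^2" by simp
    have y2: "L^2 * (norm y)^2 \<le> L^2 * (27 * R^2 + 12 * (D k \<omega>)^2 + 12 * (Dp k \<omega>)^2)"
      using normy2[of k \<omega>] unfolding y_def by (intro mult_left_mono) auto
    show ?thesis using f1 g1 y2 unfolding y_def[symmetric] g_def[symmetric] \<alpha>1_def \<beta>1_def
      by (simp add: algebra_simps)
  qed
  have wM[measurable]: "(\<lambda>\<omega>. G (extrap x xm1 k \<omega>) (om k \<omega>) - F (extrap x xm1 k \<omega>)) \<in> borel_measurable M" for k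
    by measurable
  have Wb: "(\<integral>\<^sup>+\<omega>. ennreal ((norm (G (extrap x xm1 k \<omega>) (om k \<omega>) - F (extrap x xm1 k \<omega>)))^2) \<partial>M)
      \<le> ennreal \<alpha>2 + ennreal \<beta>2 * e k + ennreal \<beta>2 * ep k" for k
  proof -
    let ?w = "\<lambda>\<omega>. ennreal ((norm (G (extrap x xm1 k \<omega>) (om k \<omega>) - F (extrap x xm1 k \<omega>)))^2)"
    have "(\<integral>\<^sup>+\<omega>. ?w \<omega> \<partial>M) = (\<integral>\<^sup>+\<omega>. 1 * ?w \<omega> \<partial>M)" by simp
    also have "\<dots> = (\<integral>\<^sup>+\<omega>. 1 * nn_cond_exp M (Filt k) ?w \<omega> \<partial>M)"
      by (rule sigma_finite_subalgebra.nn_cond_exp_intg[OF sfs, symmetric]) measurable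
    also have "\<dots> \<le> (\<integral>\<^sup>+\<omega>. ennreal (\<nu>1^2 * (norm (extrap x xm1 k \<omega>))^2 + \<nu>2^2) \<partial>M)"
      using A4(5)[rule_format, of k] by (intro nn_integral_mono_AE) auto
    also have "\<dots> \<le> (\<integral>\<^sup>+\<omega>. ennreal (\<alpha>2 + \<beta>2 * (D k \<omega>)^2 + \<beta>2 * (Dp k \<omega>)^2) \<partial>M)"
    proof (rule nn_integral_mono, rule ennreal_leI)
      fix \<omega>
      have "\<nu>1^2 * (norm (extrap x xm1 k \<omega>))^2 \<le> \<nu>1^2 * (27 * R^2 + 12 * (D k \<omega>)^2 + 12 * (Dp k \<omega>)^2)"
        using normy2[of k \<omega>] by (intro mult_left_mono) auto
      then show "\<nu>1^2 * (norm (extrap x xm1 k \<omega>))^2 + \<nu>2^2 \<le> \<alpha>2 + \<beta>2 * (D k \<omega>)^2 + \<beta>2 * (Dp k \<omega>)^2"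
        unfolding \<alpha>2_def \<beta>2_def by (simp add: algebra_simps)
    qed
    also have "\<dots> = ennreal \<alpha>2 + ennreal \<beta>2 * e k + ennreal \<beta>2 * ep k" using LIN ab0 by simp
    finally show ?thesis .
  qed
  have Gb: "(\<integral>\<^sup>+\<omega>. ennreal ((norm (G (extrap x xm1 k \<omega>) (om k \<omega>)))^2) \<partial>M)
      \<le> (ennreal \<alpha>1 + ennreal \<beta>1 * e k + ennreal \<beta>1 * ep k) + 2 * (ennreal \<alpha>2 + ennreal \<beta>2 * e k + ennreal \<beta>2 * ep k)" for k
  proof -
    let ?w = "\<lambda>\<omega>. ennreal ((norm (G (extrap x xm1 k \<omega>) (om k \<omega>) - F (extrap x xm1 k \<omega>)))^2)"
    have "(\<integral>\<^sup>+\<omega>. ennreal ((norm (G (extrap x xm1 k \<omega>) (om k \<omega>)))^2) \<partial>M)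
        \<le> (\<integral>\<^sup>+\<omega>. ennreal (\<alpha>1 + \<beta>1 * (D k \<omega>)^2 + \<beta>1 * (Dp k \<omega>)^2) + 2 * ?w \<omega> \<partial>M)"
    proof (rule nn_integral_mono)
      fix \<omega>
      have "ennreal ((norm (G (extrap x xm1 k \<omega>) (om k \<omega>)))^2)
          \<le> ennreal (\<alpha>1 + \<beta>1 * (D k \<omega>)^2 + \<beta>1 * (Dp k \<omega>)^2 + 2 * (norm (G (extrap x xm1 k \<omega>) (om k \<omega>) - F (extrap x xm1 k \<omega>)))^2)"
        using normg[of k \<omega>] by (rule ennreal_leI)
      also have "\<dots> = ennreal (\<alpha>1 + \<beta>1 * (D k \<omega>)^2 + \<beta>1 * (Dp k \<omega>)^2) + 2 * ?w \<omega>"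
        using ab0 by (simp add: ennreal_plus ennreal_mult)
      finally show "ennreal ((norm (G (extrap x xm1 k \<omega>) (om k \<omega>)))^2)
          \<le> ennreal (\<alpha>1 + \<beta>1 * (D k \<omega>)^2 + \<beta>1 * (Dp k \<omega>)^2) + 2 * ?w \<omega>" .
    qed
    also have "\<dots> = (\<integral>\<^sup>+\<omega>. ennreal (\<alpha>1 + \<beta>1 * (D k \<omega>)^2 + \<beta>1 * (Dp k \<omega>)^2) \<partial>M) + 2 * (\<integral>\<^sup>+\<omega>. ?w \<omega> \<partial>M)"
      by (simp add: nn_integral_add nn_integral_cmult)
    also have "\<dots> \<le> (ennreal \<alpha>1 + ennreal \<beta>1 * e k + ennreal \<beta>1 * ep k) + 2 * (ennreal \<alpha>2 + ennreal \<beta>2 * e k + ennreal \<beta>2 * ep k)"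
      using LIN[of \<alpha>1 \<beta>1 \<beta>1 k] ab0 Wb[of k] by (intro add_mono mult_left_mono) auto
    finally show ?thesis .
  qed
  have indM[measurable]: "{\<omega> \<in> space M. l k \<omega> = i} \<in> sets M" for k i by measurable
  have idF[measurable]: "(\<lambda>\<omega>. infdist (x k \<omega>) S) \<in> borel_measurable (Filt k)" for k S using infd_meas[OF xF] .
  have idM[measurable]: "(\<lambda>\<omega>. infdist (x k \<omega>) S) \<in> borel_measurable M" for k S using infd_meas[OF xM] .
  have Qb: "ennreal (2 * c) * e k \<le> (\<Sum>i\<in>{1..m}. \<integral>\<^sup>+\<omega>. ennreal ((infdist (x k \<omega>) (Xs i))^2 / 2)
              * ennreal (indicator {\<omega> \<in> space M. l k \<omega> = i} \<omega>) \<partial>M)" for k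
  proof -
    have step1: "(\<integral>\<^sup>+\<omega>. ennreal ((infdist (x k \<omega>) (Xs i))^2 / 2) * ennreal (\<rho> / real m) \<partial>M)
       \<le> (\<integral>\<^sup>+\<omega>. ennreal ((infdist (x k \<omega>) (Xs i))^2 / 2) * ennreal (indicator {\<omega> \<in> space M. l k \<omega> = i} \<omega>) \<partial>M)"
      if i: "i \<in> {1..m}" for i
    proof -
      let ?ind = "\<lambda>\<omega>. ennreal (indicator {\<omega> \<in> space M. l k \<omega> = i} \<omega>)"
      have ae: "AE \<omega> in M. ennreal (\<rho> / real m) \<le> nn_cond_exp M (Filt k) ?ind \<omega>"
        using A6(2)[rule_format, OF i]
      proof eventually_elim
        case (elim \<omega>)
        have "\<rho> / real m \<le> \<rho>i i / real m" using rho_le[OF i] by (simp add: divide_right_mono)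
        also have "\<dots> \<le> real_cond_exp M (Filt k) (indicator {\<omega> \<in> space M. l k \<omega> = i}) \<omega>"
          using spec[OF elim, of k] by simp
        also have "\<dots> \<le> enn2real (nn_cond_exp M (Filt k) ?ind \<omega>)" by (rule rce_le_nn)
        finally have "ennreal (\<rho> / real m) \<le> ennreal (enn2real (nn_cond_exp M (Filt k) ?ind \<omega>))"
          by (rule ennreal_leI)
        then show ?case using ennreal_enn2real_le order_trans by blast
      qed
      have "(\<integral>\<^sup>+\<omega>. ennreal ((infdist (x k \<omega>) (Xs i))^2 / 2) * ennreal (\<rho> / real m) \<partial>M)
          \<le> (\<integral>\<^sup>+\<omega>. ennreal ((infdist (x k \<omega>) (Xs i))^2 / 2) * nn_cond_exp M (Filt k) ?ind \<omega> \<partial>M)"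
        using ae by (intro nn_integral_mono_AE) (auto elim!: eventually_mono intro: mult_left_mono)
      also have "\<dots> = (\<integral>\<^sup>+\<omega>. ennreal ((infdist (x k \<omega>) (Xs i))^2 / 2) * ?ind \<omega> \<partial>M)"
        by (rule sigma_finite_subalgebra.nn_cond_exp_intg[OF sfs]) measurable
      finally show ?thesis .
    qed
    have "ennreal (2 * c) * e k = (\<integral>\<^sup>+\<omega>. ennreal ((D k \<omega>)^2 / (2 * \<eta>)) * ennreal (\<rho> / real m) \<partial>M)"
    proof -
      have "ennreal (2 * c) * e k = (\<integral>\<^sup>+\<omega>. ennreal (2 * c) * ennreal ((D k \<omega>)^2) \<partial>M)"
        unfolding e_def by (simp add: nn_integral_cmult)
      also have "\<dots> = (\<integral>\<^sup>+\<omega>. ennreal ((D k \<omega>)^2 / (2 * \<eta>)) * ennreal (\<rho> / real m) \<partial>M)"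
      proof (rule nn_integral_cong)
        fix \<omega>
        have "2 * c * (D k \<omega>)^2 = (D k \<omega>)^2 / (2 * \<eta>) * (\<rho> / real m)"
          unfolding c_def using m_pos A5(1) by (simp add: field_simps)
        then show "ennreal (2 * c) * ennreal ((D k \<omega>)^2) = ennreal ((D k \<omega>)^2 / (2 * \<eta>)) * ennreal (\<rho> / real m)"
          using c_pos A5(1) rho_pos by (simp add: ennreal_mult[symmetric])
      qed
      finally show ?thesis .
    qed
    also have "\<dots> \<le> (\<integral>\<^sup>+\<omega>. (\<Sum>i\<in>{1..m}. ennreal ((infdist (x k \<omega>) (Xs i))^2 / 2)) * ennreal (\<rho> / real m) \<partial>M)"
    proof (rule nn_integral_mono, rule mult_right_mono)
      fix \<omega>
      have "(D k \<omega>)^2 \<le> \<eta> * (\<Sum>i\<in>{1..m}. (infdist (x k \<omega>) (Xs i))^2)" unfolding D_def by (rule A5')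
      then have "(D k \<omega>)^2 / (2 * \<eta>) \<le> (\<Sum>i\<in>{1..m}. (infdist (x k \<omega>) (Xs i))^2 / 2)"
        using A5(1) by (simp add: field_simps sum_divide_distrib[symmetric])
      then show "ennreal ((D k \<omega>)^2 / (2 * \<eta>)) \<le> (\<Sum>i\<in>{1..m}. ennreal ((infdist (x k \<omega>) (Xs i))^2 / 2))"
        by (simp add: ennreal_leI)
    qed simp
    also have "\<dots> = (\<Sum>i\<in>{1..m}. \<integral>\<^sup>+\<omega>. ennreal ((infdist (x k \<omega>) (Xs i))^2 / 2) * ennreal (\<rho> / real m) \<partial>M)"
      unfolding sum_distrib_right by (rule nn_integral_sum) measurable
    also have "\<dots> \<le> (\<Sum>i\<in>{1..m}. \<integral>\<^sup>+\<omega>. ennreal ((infdist (x k \<omega>) (Xs i))^2 / 2)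
              * ennreal (indicator {\<omega> \<in> space M. l k \<omega> = i} \<omega>) \<partial>M)"
      by (intro sum_mono step1)
    finally show ?thesis .
  qed
  define K where "K = 2 + 1 / c"
  have K0: "K \<ge> 0" unfolding K_def using c_pos by simp
  have MAINb: "e (Suc k) + ennreal (2 * c) * e k \<le> ennreal (1 + c) * e k
      + ennreal (K * (\<gamma> k)^2) * (\<integral>\<^sup>+\<omega>. ennreal ((norm (G (extrap x xm1 k \<omega>) (om k \<omega>)))^2) \<partial>M)" for k
  proof -
    let ?f = "\<lambda>i \<omega>. ennreal ((infdist (x k \<omega>) (Xs i))^2 / 2) * ennreal (indicator {\<omega> \<in> space M. l k \<omega> = i} \<omega>)"
    let ?gn = "\<lambda>\<omega>. ennreal ((norm (G (extrap x xm1 k \<omega>) (om k \<omega>)))^2)"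
    have pw: "ennreal ((D (Suc k) \<omega>)^2) + (\<Sum>i\<in>{1..m}. ?f i \<omega>)
        \<le> ennreal (1 + c) * ennreal ((D k \<omega>)^2) + ennreal (K * (\<gamma> k)^2) * ?gn \<omega>"
      if \<omega>: "\<omega> \<in> space M" for \<omega>
    proof -
      define li where "li = l k \<omega>"
      have li: "li \<in> {1..m}" unfolding li_def using l_range \<omega> by simp
      define h where "h = \<gamma> k *\<^sub>R G (extrap x xm1 k \<omega>) (om k \<omega>)"
      have xs: "x (Suc k) \<omega> = closest_point (Xs li) (x k \<omega> - h)"
        unfolding li_def h_def using rSPRG \<omega> by simp
      have sg: "(infdist (closest_point (Xs li) (x k \<omega> - h)) X)^2 + (infdist (x k \<omega>) (Xs li))^2 / 2
          \<le> (1 + c) * (infdist (x k \<omega>) X)^2 + (2 + 1/c) * (norm h)^2"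
        using Xs_cc li XXs[OF li] Xcl X_ne c_pos by (intro step_geom) auto
      have nh: "(norm h)^2 = (\<gamma> k)^2 * (norm (G (extrap x xm1 k \<omega>) (om k \<omega>)))^2"
        unfolding h_def using step_pos by (simp add: power_mult_distrib)
      have sum_eq: "(\<Sum>i\<in>{1..m}. ?f i \<omega>) = ennreal ((infdist (x k \<omega>) (Xs li))^2 / 2)"
      proof -
        have "(\<Sum>i\<in>{1..m}. ?f i \<omega>) = (\<Sum>i\<in>{1..m}. if li = i then ennreal ((infdist (x k \<omega>) (Xs i))^2 / 2) else 0)"
          using \<omega> unfolding li_def by (intro sum.cong) (auto simp: indicator_def)
        also have "\<dots> = ennreal ((infdist (x k \<omega>) (Xs li))^2 / 2)" using li by (simp add: sum.delta)
        finally show ?thesis .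
      qed
      have "ennreal ((D (Suc k) \<omega>)^2) + (\<Sum>i\<in>{1..m}. ?f i \<omega>)
          = ennreal ((D (Suc k) \<omega>)^2 + (infdist (x k \<omega>) (Xs li))^2 / 2)"
        unfolding sum_eq by (simp add: ennreal_plus)
      also have "\<dots> \<le> ennreal ((1 + c) * (D k \<omega>)^2 + K * (\<gamma> k)^2 * (norm (G (extrap x xm1 k \<omega>) (om k \<omega>)))^2)"
        using sg unfolding xs[symmetric] nh D_def K_def by (intro ennreal_leI) (simp add: mult.assoc)
      also have "\<dots> = ennreal ((1 + c) * (D k \<omega>)^2) + ennreal (K * (\<gamma> k)^2 * (norm (G (extrap x xm1 k \<omega>) (om k \<omega>)))^2)"
        by (rule ennreal_plus) (use c_pos K0 in auto)
      also have "ennreal ((1 + c) * (D k \<omega>)^2) = ennreal (1 + c) * ennreal ((D k \<omega>)^2)"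
        by (rule ennreal_mult) (use c_pos in auto)
      also have "ennreal (K * (\<gamma> k)^2 * (norm (G (extrap x xm1 k \<omega>) (om k \<omega>)))^2) = ennreal (K * (\<gamma> k)^2) * ?gn \<omega>"
        by (rule ennreal_mult) (use K0 in auto)
      finally show ?thesis .
    qed
    have "e (Suc k) + ennreal (2 * c) * e k \<le> e (Suc k) + (\<Sum>i\<in>{1..m}. \<integral>\<^sup>+\<omega>. ?f i \<omega> \<partial>M)"
      using Qb[of k] by (rule add_left_mono)
    also have "\<dots> = (\<integral>\<^sup>+\<omega>. ennreal ((D (Suc k) \<omega>)^2) + (\<Sum>i\<in>{1..m}. ?f i \<omega>) \<partial>M)"
      unfolding e_def by (subst nn_integral_add) (auto simp: nn_integral_sum)
    also have "\<dots> \<le> (\<integral>\<^sup>+\<omega>. ennreal (1 + c) * ennreal ((D k \<omega>)^2) + ennreal (K * (\<gamma> k)^2) * ?gn \<omega> \<partial>M)"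
      using pw by (intro nn_integral_mono) auto
    also have "\<dots> = ennreal (1 + c) * e k + ennreal (K * (\<gamma> k)^2) * (\<integral>\<^sup>+\<omega>. ?gn \<omega> \<partial>M)"
      unfolding e_def by (simp add: nn_integral_add nn_integral_cmult)
    finally show ?thesis .
  qed
  define A0 where "A0 = \<alpha>1 + 2 * \<alpha>2 + \<beta>1 + 2 * \<beta>2"
  have A00: "A0 \<ge> 0" unfolding A0_def using ab0 by simp
  have KEY: "\<exists>z\<ge>0. e (Suc k) = ennreal z \<and> z \<le> (1 - c) * a + (K * A0 * (\<gamma> k)^2) * (1 + a + b)"
    if ea: "e k = ennreal a" and eb: "ep k = ennreal b" and a0: "a \<ge> 0" and b0: "b \<ge> 0" for k a b
  proof -
    define \<Gamma> where "\<Gamma> = \<alpha>1 + \<beta>1 * a + \<beta>1 * b + 2 * (\<alpha>2 + \<beta>2 * a + \<beta>2 * b)"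
    have e2: "2 * ennreal y = ennreal (2 * y)" if "y \<ge> 0" for y
      using that by (simp add: ennreal_mult)
    have \<Gamma>0: "\<Gamma> \<ge> 0" unfolding \<Gamma>_def using ab0 a0 b0 by simp
    have "(\<integral>\<^sup>+\<omega>. ennreal ((norm (G (extrap x xm1 k \<omega>) (om k \<omega>)))^2) \<partial>M) \<le> ennreal \<Gamma>"
      using Gb[of k] unfolding ea eb \<Gamma>_def using ab0 a0 b0
      by (simp add: ennreal_plus ennreal_mult[symmetric] e2 del: ennreal_plus_if)
    then have "e (Suc k) + ennreal (2 * c) * ennreal a \<le> ennreal (1 + c) * ennreal a + ennreal (K * (\<gamma> k)^2) * ennreal \<Gamma>"
      using MAINb[of k] unfolding ea by (meson add_left_mono mult_left_mono order_trans zero_le)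
    also have "\<dots> = ennreal ((1 + c) * a + K * (\<gamma> k)^2 * \<Gamma>)"
    proof -
      have "ennreal ((1 + c) * a + K * (\<gamma> k)^2 * \<Gamma>) = ennreal ((1 + c) * a) + ennreal (K * (\<gamma> k)^2 * \<Gamma>)"
        by (rule ennreal_plus) (use c_pos K0 a0 \<Gamma>0 in auto)
      also have "ennreal ((1 + c) * a) = ennreal (1 + c) * ennreal a" by (rule ennreal_mult) (use c_pos a0 in auto)
      also have "ennreal (K * (\<gamma> k)^2 * \<Gamma>) = ennreal (K * (\<gamma> k)^2) * ennreal \<Gamma>" by (rule ennreal_mult) (use K0 \<Gamma>0 in auto)
      finally show ?thesis by simp
    qed
    finally have main: "e (Suc k) + ennreal (2 * c * a) \<le> ennreal ((1 + c) * a + K * (\<gamma> k)^2 * \<Gamma>)"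
      using c_pos a0 by (simp add: ennreal_mult[symmetric])
    then have "e (Suc k) < top"
      by (metis (no_types, lifting) ennreal_less_top le_iff_add linorder_not_le order_le_less_trans top.not_eq_extremum add_increasing2 zero_le)
    then obtain z where z: "e (Suc k) = ennreal z" "z \<ge> 0"
      by (metis ennreal_enn2real enn2real_nonneg)
    have "ennreal (z + 2 * c * a) \<le> ennreal ((1 + c) * a + K * (\<gamma> k)^2 * \<Gamma>)"
      using main z c_pos a0 by (simp add: ennreal_plus del: ennreal_plus_if)
    then have zb: "z + 2 * c * a \<le> (1 + c) * a + K * (\<gamma> k)^2 * \<Gamma>"
      using c_pos a0 K0 \<Gamma>0 by (subst (asm) ennreal_le_iff) auto
    have "\<Gamma> \<le> A0 * (1 + a + b)"
    proof -
      have "\<Gamma> = (\<alpha>1 + 2 * \<alpha>2) + (\<beta>1 + 2 * \<beta>2) * (a + b)" unfolding \<Gamma>_def by (simp add: algebra_simps)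
      also have "\<dots> \<le> A0 * 1 + A0 * (a + b)"
        unfolding A0_def using ab0 a0 b0 by (intro add_mono mult_right_mono) auto
      finally show ?thesis by (simp add: algebra_simps)
    qed
    then have "K * (\<gamma> k)^2 * \<Gamma> \<le> K * (\<gamma> k)^2 * (A0 * (1 + a + b))"
      using K0 by (intro mult_left_mono) auto
    with zb have "z \<le> (1 - c) * a + (K * A0 * (\<gamma> k)^2) * (1 + a + b)" by (simp add: algebra_simps)
    then show ?thesis using z by blast
  qed
  define E where "E = (\<lambda>k. enn2real (e k))"
  define u where "u = (\<lambda>k. if k = 0 then (infdist xm1 X)^2 else E (k - 1))"
  have fin: "e k = ennreal (E k) \<and> E k \<ge> 0 \<and> ep k = ennreal (u k) \<and> u k \<ge> 0" for k
  proof (induction k)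
    case 0
    show ?case using e0 ep0 unfolding E_def u_def by simp
  next
    case (Suc k)
    then obtain z where z: "z \<ge> 0" "e (Suc k) = ennreal z"
      using KEY[of k "E k" "u k"] by blast
    have "E (Suc k) = z" unfolding E_def using z by simp
    then show ?case using z Suc ep_Suc[of k] unfolding u_def by simp
  qed
  define a where "a = (\<lambda>k. K * A0 * (\<gamma> k)^2)"
  have apos: "a k \<ge> 0" for k unfolding a_def using K0 A00 by simp
  have u0: "u k \<ge> 0" for k using fin by blast
  have Erec: "E (Suc k) \<le> (1 - c) * E k + a k * (1 + E k + u k)" for k
  proof -
    obtain z where z: "z \<ge> 0" "e (Suc k) = ennreal z" "z \<le> (1 - c) * E k + (K * A0 * (\<gamma> k)^2) * (1 + E k + u k)"
      using KEY[of k "E k" "u k"] fin[of k] by blast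
    have "E (Suc k) = z" unfolding E_def using z by simp
    then show ?thesis using z unfolding a_def by simp
  qed
  have urec: "u (Suc (Suc k)) \<le> (1 - c) * u (Suc k) + a k * (1 + u (Suc k) + u k)" for k
    using Erec[of k] unfolding u_def by simp
  have partA: "(\<not> summable \<gamma>) \<and> summable (\<lambda>k. (\<gamma> k)^2) \<longrightarrow>
        (AE \<omega> in M. (\<lambda>k. infdist (x k \<omega>) X) \<longlonglongrightarrow> 0)"
  proof
    assume "(\<not> summable \<gamma>) \<and> summable (\<lambda>k. (\<gamma> k)^2)"
    then have sa: "summable a" unfolding a_def by (intro summable_mult) simp
    have "summable u" by (rule seq_summable[OF u0 c_pos c_le sa apos urec])
    then have sE: "summable E" using summable_Suc_iff[of u] unfolding u_def by simp
    have E0: "E k \<ge> 0" for k using fin by blast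
    have "(\<integral>\<^sup>+\<omega>. (\<Sum>k. ennreal ((D k \<omega>)^2)) \<partial>M) = (\<Sum>k. e k)"
      unfolding e_def by (rule nn_integral_suminf) measurable
    also have "\<dots> = (\<Sum>k. ennreal (E k))" using fin by simp
    also have "\<dots> \<noteq> top" using ennreal_suminf_neq_top[OF sE E0] .
    finally have "(\<integral>\<^sup>+\<omega>. (\<Sum>k. ennreal ((D k \<omega>)^2)) \<partial>M) \<noteq> \<infinity>" by simp
    then have "AE \<omega> in M. (\<Sum>k. ennreal ((D k \<omega>)^2)) \<noteq> \<infinity>"
      by (intro nn_integral_PInf_AE) measurable
    then show "AE \<omega> in M. (\<lambda>k. infdist (x k \<omega>) X) \<longlonglongrightarrow> 0"
    proof eventually_elim
      case (elim \<omega>)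
      then have "summable (\<lambda>k. (D k \<omega>)^2)" by (intro summable_suminf_not_top) auto
      then have "(\<lambda>k. (D k \<omega>)^2) \<longlonglongrightarrow> 0" by (rule summable_LIMSEQ_zero)
      then have "(\<lambda>k. sqrt ((D k \<omega>)^2)) \<longlonglongrightarrow> sqrt 0" by (rule tendsto_real_sqrt)
      then show ?case using D0 unfolding D_def by simp
    qed
  qed
  have E0: "E k \<ge> 0" for k using fin by blast
  have RATE: "\<exists>B>0. \<forall>k\<ge>1. (\<integral>\<^sup>+\<omega>. ennreal (D k \<omega>) \<partial>M) \<le> ennreal (B / real k powr (t / 2))"
    if t1: "t \<ge> 1" and gam: "\<forall>k\<ge>1. \<gamma> k = 1 / real k powr (t / 2)" for t :: real
  proof -
    have g2: "(\<gamma> k)^2 = 1 / real k powr t" if "k \<ge> 1" for k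
    proof -
      have "(real k powr (t / 2))^2 = real k powr t"
        using that by (simp add: powr_powr[symmetric] powr_realpow[symmetric] power2_eq_square powr_add[symmetric])
      then show ?thesis using gam that by (simp add: power_divide)
    qed
    have "(\<lambda>k. 1 / real k powr (t / 2)) \<longlonglongrightarrow> 0"
    proof -
      have "(\<lambda>k. real k powr (- (t / 2))) \<longlonglongrightarrow> 0"
        using t1 by (intro tendsto_neg_powr filterlim_real_sequentially) auto
      then show ?thesis by (simp only: powr_minus_divide)
    qed
    then have "\<gamma> \<longlonglongrightarrow> 0"
    proof (rule Lim_transform_eventually)
      show "\<forall>\<^sub>F k in sequentially. 1 / real k powr (t / 2) = \<gamma> k"
        using eventually_ge_at_top[of 1] by eventually_elim (use gam in auto)
    qed
    then have a_lim: "a \<longlonglongrightarrow> 0" unfolding a_def using tendsto_mult_right_zero tendsto_power[of \<gamma> 0 sequentially 2]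
      by (metis power_zero_numeral)
    then obtain A where A: "A \<ge> 0" "\<And>k. u (Suc (Suc k)) \<le> (1 - c) * u (Suc k) + A * a k"
      using seq_lin[OF u0 c_pos c_le a_lim apos urec] by blast
    have rec2: "E (Suc k) \<le> (1 - c) * E k + (A * K * A0) * (\<gamma> k)^2" for k
      using A(2)[of k] unfolding u_def a_def by (simp add: mult.assoc)
    have gpos: "(\<gamma> k)^2 > 0" for k using step_pos[rule_format, of k] by simp
    have ev: "\<forall>\<^sub>F k in sequentially. (1 - c/2) * (\<gamma> k)^2 \<le> (\<gamma> (Suc k))^2"
      using powr_ratio_ev[OF c_pos c_le, of t] eventually_ge_at_top[of 1]
      by eventually_elim (simp add: g2)
    obtain B where B: "B > 0" "\<And>k. E k \<le> B * (\<gamma> k)^2"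
      using seq_rate[OF E0 c_pos c_le _ gpos rec2 ev] A K0 A00 by (meson mult_nonneg_nonneg)
    have "(\<integral>\<^sup>+\<omega>. ennreal (D k \<omega>) \<partial>M) \<le> ennreal (sqrt B / real k powr (t / 2))" if k: "k \<ge> 1" for k
    proof -
      have s: "sqrt B * \<gamma> k > 0" using B step_pos[rule_format, of k] by simp
      have V: "B * (\<gamma> k)^2 \<ge> 0" using B by simp
      have I: "(\<integral>\<^sup>+\<omega>. ennreal ((D k \<omega>)^2) \<partial>M) \<le> ennreal (B * (\<gamma> k)^2)"
        using fin[of k] B(2)[of k] unfolding e_def by (simp add: ennreal_leI)
      have "(\<integral>\<^sup>+\<omega>. ennreal (D k \<omega>) \<partial>M) \<le> ennreal (B * (\<gamma> k)^2 / (2 * (sqrt B * \<gamma> k)) + sqrt B * \<gamma> k / 2)"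
        by (rule amgm_int[OF M DM _ s V I]) (use D0 in auto)
      also have "B * (\<gamma> k)^2 / (2 * (sqrt B * \<gamma> k)) + sqrt B * \<gamma> k / 2 = sqrt B * \<gamma> k"
      proof -
        have gen: "(s * s) * g^2 / (2 * (s * g)) = s * g / 2" if "s > 0" "g > 0" for s g :: real
          using that by (simp add: field_simps power2_eq_square)
        have "B = sqrt B * sqrt B" using B by simp
        then have "B * (\<gamma> k)^2 / (2 * (sqrt B * \<gamma> k)) = (sqrt B * sqrt B) * (\<gamma> k)^2 / (2 * (sqrt B * \<gamma> k))"
          by simp
        also have "\<dots> = sqrt B * \<gamma> k / 2" using B step_pos by (intro gen) auto
        finally have h: "B * (\<gamma> k)^2 / (2 * (sqrt B * \<gamma> k)) = sqrt B * \<gamma> k / 2" .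
        show ?thesis unfolding h by simp
      qed
      also have "sqrt B * \<gamma> k = sqrt B / real k powr (t / 2)" using gam k by simp
      finally show ?thesis .
    qed
    then show ?thesis using B by (intro exI[of _ "sqrt B"]) auto
  qed
  have partB: "\<forall>t::real. t \<ge> 1 \<and> (\<forall>k\<ge>1. \<gamma> k = 1 / (real k) powr (t / 2)) \<longrightarrow>
        (\<exists>B. \<forall>k\<ge>kbar \<beta> t.
            (\<integral>\<^sup>+ \<omega>. ennreal (infdist (x k \<omega>) X) \<partial>M) \<le> ennreal (B / (real k) powr (t / 2)))"
  proof (intro allI impI)
    fix t :: real assume h: "t \<ge> 1 \<and> (\<forall>k\<ge>1. \<gamma> k = 1 / (real k) powr (t / 2))"
    then obtain B where B: "\<forall>k\<ge>1. (\<integral>\<^sup>+\<omega>. ennreal (D k \<omega>) \<partial>M) \<le> ennreal (B / real k powr (t / 2))"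
      using RATE[of t] by blast
    show "\<exists>B. \<forall>k\<ge>kbar \<beta> t. (\<integral>\<^sup>+ \<omega>. ennreal (infdist (x k \<omega>) X) \<partial>M) \<le> ennreal (B / (real k) powr (t / 2))"
    proof (intro exI allI impI)
      fix k assume "kbar \<beta> t \<le> k"
      then have "k \<ge> 1" using kbar1[of t] h by simp
      then show "(\<integral>\<^sup>+ \<omega>. ennreal (infdist (x k \<omega>) X) \<partial>M) \<le> ennreal (B / (real k) powr (t / 2))"
        using B unfolding D_def by simp
    qed
  qed
  have partC: "(\<forall>k\<ge>1. \<gamma> k = 1 / sqrt (real k)) \<longrightarrow>
        (\<exists>B. \<forall>K\<ge>1.
            (\<integral>\<^sup>+ \<omega>. ennreal (infdist (wavg \<gamma> x (kbar \<beta> 1) K \<omega>) X) \<partial>M)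
              \<le> ennreal (B / sqrt (real K)))"
  proof
    assume h: "\<forall>k\<ge>1. \<gamma> k = 1 / sqrt (real k)"
    have h': "\<forall>k\<ge>1. \<gamma> k = 1 / real k powr (1 / 2)" using h by (simp add: powr_half_sqrt)
    obtain B where B: "B > 0" "\<forall>k\<ge>1. (\<integral>\<^sup>+\<omega>. ennreal (D k \<omega>) \<partial>M) \<le> ennreal (B / real k powr (1 / 2))"
      using RATE[of 1] h' by auto
    define B2 where "B2 = max (infdist x0 X) (sqrt 2 * B)"
    have B20: "B2 \<ge> 0" unfolding B2_def using infdist_nonneg[of x0 X] by (simp add: le_max_iff_disj)
    have Dk: "(\<integral>\<^sup>+\<omega>. ennreal (D k \<omega>) \<partial>M) \<le> ennreal (B2 / sqrt (real k + 1))" for k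
    proof (cases "k = 0")
      case True
      have "(\<integral>\<^sup>+\<omega>. ennreal (D k \<omega>) \<partial>M) = (\<integral>\<^sup>+\<omega>. ennreal (infdist x0 X) \<partial>M)"
        unfolding True D_def by (rule nn_integral_cong) (simp add: init)
      also have "\<dots> = ennreal (infdist x0 X)" by (simp add: emeasure_space_1)
      also have "\<dots> \<le> ennreal (B2 / sqrt (real k + 1))" unfolding True B2_def by (intro ennreal_leI) simp
      finally show ?thesis .
    next
      case False
      then have k1: "k \<ge> 1" by simp
      have "(\<integral>\<^sup>+\<omega>. ennreal (D k \<omega>) \<partial>M) \<le> ennreal (B / real k powr (1 / 2))" using B k1 by simp
      also have "B / real k powr (1 / 2) = B / sqrt (real k)" by (simp add: powr_half_sqrt)
      also have "B / sqrt (real k) \<le> B2 / sqrt (real k + 1)"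
      proof -
        have "sqrt (real k + 1) \<le> sqrt (2 * real k)" using k1 by (intro real_sqrt_le_mono) simp
        also have "\<dots> = sqrt 2 * sqrt (real k)" by (simp add: real_sqrt_mult)
        finally have s1: "sqrt (real k + 1) \<le> sqrt 2 * sqrt (real k)" .
        have "B / sqrt (real k) = (sqrt 2 * B) / (sqrt 2 * sqrt (real k))" by simp
        also have "\<dots> \<le> (sqrt 2 * B) / sqrt (real k + 1)"
          using s1 B k1 by (intro divide_left_mono) auto
        also have "\<dots> \<le> B2 / sqrt (real k + 1)" unfolding B2_def by (intro divide_right_mono) auto
        finally show ?thesis .
      qed
      finally show ?thesis by (simp add: ennreal_leI)
    qed
    show "\<exists>B. \<forall>K\<ge>1. (\<integral>\<^sup>+ \<omega>. ennreal (infdist (wavg \<gamma> x (kbar \<beta> 1) K \<omega>) X) \<partial>M) \<le> ennreal (B / sqrt (real K))"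
    proof (intro exI allI impI)
      fix K :: nat assume K1: "K \<ge> 1"
      define I where "I = {kbar \<beta> 1 + K div 2 .. kbar \<beta> 1 + K}"
      define S where "S = (\<Sum>k\<in>I. \<gamma> k)"
      have Ifin: "finite I" and Ine: "I \<noteq> {}" unfolding I_def by auto
      have Spos: "S > 0" unfolding S_def using Ifin Ine step_pos by (intro sum_pos) auto
      define w where "w = (\<lambda>k. 1 / S * \<gamma> k)"
      have w0: "w k \<ge> 0" for k unfolding w_def using Spos step_pos[rule_format, of k] by simp
      have w1: "sum w I = 1"
      proof -
        have "sum w I = 1 / S * S" unfolding w_def S_def by (rule sum_distrib_left[symmetric])
        then show ?thesis using Spos by simp
      qed
      have wav: "wavg \<gamma> x (kbar \<beta> 1) K \<omega> = (\<Sum>k\<in>I. w k *\<^sub>R x k \<omega>)" for \<omega>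
        unfolding wavg_def w_def I_def[symmetric] S_def[symmetric] by (simp add: scaleR_sum_right)
      have wb: "B2 / sqrt (real k + 1) \<le> sqrt 2 * B2 / sqrt (real K)" if "k \<in> I" for k
      proof -
        have "real K \<le> 2 * (real k + 1)" using that unfolding I_def by auto
        then have "sqrt (real K) \<le> sqrt (2 * (real k + 1))" by (rule real_sqrt_le_mono)
        also have "\<dots> = sqrt 2 * sqrt (real k + 1)" by (rule real_sqrt_mult)
        finally have s1: "sqrt (real K) \<le> sqrt 2 * sqrt (real k + 1)" .
        have "B2 / sqrt (real k + 1) = sqrt 2 * B2 / (sqrt 2 * sqrt (real k + 1))" by simp
        also have "\<dots> \<le> sqrt 2 * B2 / sqrt (real K)"
          using s1 B20 K1 by (intro divide_left_mono) auto
        finally show ?thesis .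
      qed
      have "(\<integral>\<^sup>+ \<omega>. ennreal (infdist (wavg \<gamma> x (kbar \<beta> 1) K \<omega>) X) \<partial>M)
          \<le> (\<integral>\<^sup>+ \<omega>. (\<Sum>k\<in>I. ennreal (w k) * ennreal (D k \<omega>)) \<partial>M)"
      proof (rule nn_integral_mono)
        fix \<omega>
        have "infdist (wavg \<gamma> x (kbar \<beta> 1) K \<omega>) X \<le> (\<Sum>k\<in>I. w k * infdist (x k \<omega>) X)"
          unfolding wav using Xcv Xcl X_ne Ifin w0 w1 by (intro infdist_convex_comb) auto
        then have "ennreal (infdist (wavg \<gamma> x (kbar \<beta> 1) K \<omega>) X) \<le> ennreal (\<Sum>k\<in>I. w k * D k \<omega>)"
          unfolding D_def by (rule ennreal_leI)
        also have "\<dots> = (\<Sum>k\<in>I. ennreal (w k) * ennreal (D k \<omega>))"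
          using w0 D0 by (simp add: ennreal_mult sum_ennreal[symmetric] del: sum_ennreal)
        finally show "ennreal (infdist (wavg \<gamma> x (kbar \<beta> 1) K \<omega>) X) \<le> (\<Sum>k\<in>I. ennreal (w k) * ennreal (D k \<omega>))" .
      qed
      also have "\<dots> = (\<Sum>k\<in>I. ennreal (w k) * (\<integral>\<^sup>+ \<omega>. ennreal (D k \<omega>) \<partial>M))"
        by (simp add: nn_integral_sum nn_integral_cmult)
      also have "\<dots> \<le> (\<Sum>k\<in>I. ennreal (w k) * ennreal (sqrt 2 * B2 / sqrt (real K)))"
      proof (rule sum_mono, rule mult_left_mono)
        fix k assume "k \<in> I"
        show "(\<integral>\<^sup>+ \<omega>. ennreal (D k \<omega>) \<partial>M) \<le> ennreal (sqrt 2 * B2 / sqrt (real K))"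
          using Dk[of k] ennreal_leI[OF wb[OF \<open>k \<in> I\<close>]] by (rule order_trans)
      qed simp
      also have "\<dots> = ennreal (\<Sum>k\<in>I. w k * (sqrt 2 * B2 / sqrt (real K)))"
      proof -
        have C0: "sqrt 2 * B2 / sqrt (real K) \<ge> 0" using B20 by simp
        have "(\<Sum>k\<in>I. ennreal (w k) * ennreal (sqrt 2 * B2 / sqrt (real K)))
            = (\<Sum>k\<in>I. ennreal (w k * (sqrt 2 * B2 / sqrt (real K))))"
          by (intro sum.cong refl ennreal_mult[symmetric] w0 C0)
        also have "\<dots> = ennreal (\<Sum>k\<in>I. w k * (sqrt 2 * B2 / sqrt (real K)))"
          by (rule sum_ennreal) (use w0 C0 in \<open>simp only: mult_nonneg_nonneg\<close>)
        finally show ?thesis .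
      qed
      also have "(\<Sum>k\<in>I. w k * (sqrt 2 * B2 / sqrt (real K))) = sqrt 2 * B2 / sqrt (real K)"
        using sum_distrib_right[of w I "sqrt 2 * B2 / sqrt (real K)", symmetric] w1 by simp
      finally show "(\<integral>\<^sup>+ \<omega>. ennreal (infdist (wavg \<gamma> x (kbar \<beta> 1) K \<omega>) X) \<partial>M) \<le> ennreal (sqrt 2 * B2 / sqrt (real K))" .
    qed
  qed
  show ?thesis using partA partB partC by blast
qed
end
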